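(* For integers $a\ge 1$ and $n\ge 2$, the modified fan graph $\overline{Fan}_n$ satisfies $$t(\overline{Fan}_n)=a\,B_{n-1}(a).$$ In particular, for $a=1$, $t(Fan_n)=F_{2n}$, where $F_k$ is the $k$-th Fibonacci number.
   Context: $t(H)$ is the number of spanning trees of $H$. The modified fan graph $\overline{Fan}_n$ is obtained from the path graph $P_n$ with vertices $p_1,\dots,p_n$ by adding a new vertex $p$ and joining $p$ to each vertex $p_j$ of $P_n$ by $a\ge 1$ parallel edges; for $a=1$ it is the fan graph $Fan_n$. The Morgan–Voyce polynomials are defined by $B_0(x)=1$, $B_1(x)=x+2$, $B_n(x)=(x+2)B_{n-1}(x)-B_{n-2}(x)$ for $n\ge2$. Fibonacci numbers: $F_1=F_2=1$, $F_k=F_{k-1}+F_{k-2}$. *)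

theory Defs
  imports Main "HOL-Number_Theory.Fib"
begin

text \<open>A finite undirected multigraph is given by a vertex set V, an edge set E
  (edge identifiers, so parallel edges are distinct elements of E) and a map
  ends assigning to each edge its two endpoints (in either order).\<close>

definition joins :: "('e \<Rightarrow> 'v \<times> 'v) \<Rightarrow> 'e \<Rightarrow> 'v \<Rightarrow> 'v \<Rightarrow> bool" where
  "joins ends e x y \<longleftrightarrow> ends e = (x, y) \<or> ends e = (y, x)"

text \<open>Loops are
  cycles of length 1, a pair of parallel edges is a cycle of length 2.\<close>
definition has_cycle :: "('e \<Rightarrow> 'v \<times> 'v) \<Rightarrow> 'e set \<Rightarrow> bool" where
  "has_cycle ends T \<longleftrightarrow>
     (\<exists>es vs. es \<noteq> [] \<and> set es \<subseteq> T \<and> distinct es \<and>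
        length vs = Suc (length es) \<and> hd vs = last vs \<and> distinct (tl vs) \<and>
        (\<forall>i < length es. joins ends (es ! i) (vs ! i) (vs ! Suc i)))"

definition adj_rel :: "('e \<Rightarrow> 'v \<times> 'v) \<Rightarrow> 'e set \<Rightarrow> ('v \<times> 'v) set" where
  "adj_rel ends T = {(x, y). \<exists>e\<in>T. joins ends e x y}"

definition connected_on :: "'v set \<Rightarrow> ('e \<Rightarrow> 'v \<times> 'v) \<Rightarrow> 'e set \<Rightarrow> bool" where
  "connected_on V ends T \<longleftrightarrow> (\<forall>u\<in>V. \<forall>v\<in>V. (u, v) \<in> (adj_rel ends T)\<^sup>*)"

definition is_spanning_tree ::
  "'v set \<Rightarrow> 'e set \<Rightarrow> ('e \<Rightarrow> 'v \<times> 'v) \<Rightarrow> 'e set \<Rightarrow> bool" where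
  "is_spanning_tree V E ends T \<longleftrightarrow>
     T \<subseteq> E \<and> connected_on V ends T \<and> \<not> has_cycle ends T"

definition num_spanning_trees :: "'v set \<Rightarrow> 'e set \<Rightarrow> ('e \<Rightarrow> 'v \<times> 'v) \<Rightarrow> nat" where
  "num_spanning_trees V E ends = card {T. is_spanning_tree V E ends T}"

text \<open>Vertex 0 is the apex p, vertex j (1 \<le> j \<le> n) is p_j.
  Edge Inl j (1 \<le> j < n) is the path edge p_j p_(j+1);
  edge Inr (j,k) (1 \<le> j \<le> n, 1 \<le> k \<le> a) is the k-th parallel edge p p_j.\<close>

definition mfan_verts :: "nat \<Rightarrow> nat set" where
  "mfan_verts n = {0..n}"

definition mfan_edges :: "nat \<Rightarrow> nat \<Rightarrow> (nat + nat \<times> nat) set" where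
  "mfan_edges a n = Inl ` {1..<n} \<union> Inr ` ({1..n} \<times> {1..a})"

fun mfan_ends :: "nat + nat \<times> nat \<Rightarrow> nat \<times> nat" where
  "mfan_ends (Inl j) = (j, Suc j)"
| "mfan_ends (Inr (j, k)) = (0, j)"

fun morgan_voyce_B :: "nat \<Rightarrow> 'a::comm_ring_1 \<Rightarrow> 'a" where
  "morgan_voyce_B 0 x = 1"
| "morgan_voyce_B (Suc 0) x = x + 2"
| "morgan_voyce_B (Suc (Suc n)) x =
     (x + 2) * morgan_voyce_B (Suc n) x - morgan_voyce_B n x"

end

theory Submission
  imports Defs
begin


lemma joins_sym: "joins ends e x y \<longleftrightarrow> joins ends e y x"
  unfolding joins_def by auto

lemma adj_sym: "(x,y) \<in> adj_rel ends T \<Longrightarrow> (y,x) \<in> adj_rel ends T"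
  unfolding adj_rel_def joins_def by auto

lemma rtr_sym: "(x,y) \<in> (adj_rel ends T)\<^sup>* \<Longrightarrow> (y,x) \<in> (adj_rel ends T)\<^sup>*"
proof (induction rule: rtrancl_induct)
  case base then show ?case by simp
next
  case (step y z)
  then show ?case using adj_sym by (metis converse_rtrancl_into_rtrancl)
qed

lemma adj_mono: "S \<subseteq> T \<Longrightarrow> adj_rel ends S \<subseteq> adj_rel ends T"
  unfolding adj_rel_def by auto

lemma rtr_mono: "S \<subseteq> T \<Longrightarrow> (x,y) \<in> (adj_rel ends S)\<^sup>* \<Longrightarrow> (x,y) \<in> (adj_rel ends T)\<^sup>*"
  using rtrancl_mono[OF adj_mono] by blast

lemma edge_adj: "e \<in> T \<Longrightarrow> joins ends e x y \<Longrightarrow> (x,y) \<in> adj_rel ends T"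
  unfolding adj_rel_def by (simp add: bexI)

lemma edge_rtr: "e \<in> T \<Longrightarrow> joins ends e x y \<Longrightarrow> (x,y) \<in> (adj_rel ends T)\<^sup>*"
  by (rule r_into_rtrancl, rule edge_adj)

lemma joins_ends: "joins ends e (fst (ends e)) (snd (ends e))"
  unfolding joins_def by simp

definition spath where
  "spath ends S x y vs es \<longleftrightarrow> length vs = Suc (length es) \<and> hd vs = x \<and> last vs = y \<and>
     distinct vs \<and> distinct es \<and> set es \<subseteq> S \<and>
     (\<forall>i<length es. joins ends (es ! i) (vs ! i) (vs ! Suc i))"

lemma path_exists:
  assumes "(x,y) \<in> (adj_rel ends S)\<^sup>*"
  shows "\<exists>vs es. spath ends S x y vs es"
  using assms
proof (induction rule: converse_rtrancl_induct)
  case base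
  show ?case by (rule exI[of _ "[y]"], rule exI[of _ "[]"]) (simp add: spath_def)
next
  case (step x z)
  then obtain vs es where p: "spath ends S z y vs es" by blast
  from step(1) obtain e where e: "e \<in> S" "joins ends e x z" unfolding adj_rel_def by auto
  show ?case
  proof (cases "x \<in> set vs")
    case True
    then obtain i where i: "i < length vs" "vs ! i = x" by (auto simp: in_set_conv_nth)
    have "spath ends S x y (drop i vs) (drop i es)"
      unfolding spath_def
    proof (intro conjI)
      show "length (drop i vs) = Suc (length (drop i es))" using p i unfolding spath_def by auto
      show "hd (drop i vs) = x" using i by (simp add: hd_drop_conv_nth)
      show "last (drop i vs) = y" using p i unfolding spath_def by (simp add: last_drop)
      show "distinct (drop i vs)" using p unfolding spath_def by simp
      show "distinct (drop i es)" using p unfolding spath_def by simp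
      show "set (drop i es) \<subseteq> S" using p unfolding spath_def by (meson order_trans set_drop_subset)
      show "\<forall>k<length (drop i es). joins ends (drop i es ! k) (drop i vs ! k) (drop i vs ! Suc k)"
      proof (intro allI impI)
        fix k assume k: "k < length (drop i es)"
        then have "i + k < length es" by simp
        then have "joins ends (es ! (i+k)) (vs ! (i+k)) (vs ! Suc (i+k))" using p unfolding spath_def by blast
        then show "joins ends (drop i es ! k) (drop i vs ! k) (drop i vs ! Suc k)"
          using k i p unfolding spath_def by simp
      qed
    qed
    then show ?thesis by blast
  next
    case False
    have ne: "vs \<noteq> []" using p unfolding spath_def by auto
    have hz: "vs ! 0 = z" using p ne unfolding spath_def by (simp add: hd_conv_nth)
    have "e \<notin> set es"
    proof
      assume "e \<in> set es"
      then obtain j where j: "j < length es" "es ! j = e" by (auto simp: in_set_conv_nth)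
      then have "joins ends e (vs ! j) (vs ! Suc j)" using p unfolding spath_def by blast
      moreover have "vs ! j \<in> set vs" "vs ! Suc j \<in> set vs" using j p unfolding spath_def by auto
      ultimately show False using e(2) False unfolding joins_def by auto
    qed
    have "spath ends S x y (x # vs) (e # es)"
      unfolding spath_def
    proof (intro conjI)
      show "\<forall>i<length (e # es). joins ends ((e # es) ! i) ((x # vs) ! i) ((x # vs) ! Suc i)"
      proof (intro allI impI)
        fix i assume i: "i < length (e # es)"
        show "joins ends ((e # es) ! i) ((x # vs) ! i) ((x # vs) ! Suc i)"
        proof (cases i)
          case 0 then show ?thesis using e hz by simp
        next
          case (Suc k) then show ?thesis using i p unfolding spath_def by simp
        qed
      qed
    qed (use p ne False \<open>e \<notin> set es\<close> e in \<open>auto simp: spath_def\<close>)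
    then show ?thesis by blast
  qed
qed

lemma cycle_imp:
  assumes "has_cycle ends T"
  shows "\<exists>g\<in>T. (fst (ends g), snd (ends g)) \<in> (adj_rel ends (T - {g}))\<^sup>*"
proof -
  obtain es vs where c: "es \<noteq> []" "set es \<subseteq> T" "distinct es" "length vs = Suc (length es)"
     "hd vs = last vs" "distinct (tl vs)" "\<forall>i<length es. joins ends (es ! i) (vs ! i) (vs ! Suc i)"
    using assms unfolding has_cycle_def by blast
  define g where "g = es ! 0"
  have gT: "g \<in> T" using c(1,2) g_def by (simp add: subset_iff)
  have reach: "(vs ! 1, vs ! j) \<in> (adj_rel ends (T - {g}))\<^sup>*" if "1 \<le> j" "j \<le> length es" for j
    using that
  proof (induction j)
    case 0 then show ?case by simp
  next
    case (Suc j)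
    show ?case
    proof (cases "j = 0")
      case True then show ?thesis by simp
    next
      case False
      then have IH: "(vs ! 1, vs ! j) \<in> (adj_rel ends (T - {g}))\<^sup>*" using Suc by simp
      have jl: "j < length es" using Suc by simp
      have "es ! j \<noteq> g" using c(3) jl False c(1) unfolding g_def by (simp add: nth_eq_iff_index_eq)
      moreover have "es ! j \<in> T" using c(2) jl by auto
      moreover have "joins ends (es ! j) (vs ! j) (vs ! Suc j)" using c(7) jl by blast
      ultimately have "(vs ! j, vs ! Suc j) \<in> adj_rel ends (T - {g})" unfolding adj_rel_def by blast
      then show ?thesis using IH by simp
    qed
  qed
  have l1: "1 \<le> length es" using c(1) by (cases es) auto
  have r: "(vs ! 1, vs ! length es) \<in> (adj_rel ends (T - {g}))\<^sup>*" using reach[OF l1] by simp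
  have ne: "vs \<noteq> []" using c(4) by auto
  have "vs ! length es = vs ! 0" using c(4,5) ne by (simp add: hd_conv_nth last_conv_nth)
  with r have r2: "(vs ! 1, vs ! 0) \<in> (adj_rel ends (T - {g}))\<^sup>*" by simp
  have "joins ends g (vs ! 0) (vs ! 1)" using c(7) c(1) g_def by auto
  then have "(fst (ends g), snd (ends g)) \<in> (adj_rel ends (T - {g}))\<^sup>*"
    using r2 rtr_sym unfolding joins_def by (metis fst_conv snd_conv)
  then show ?thesis using gT by blast
qed

lemma imp_cycle:
  assumes "g \<in> T" "(fst (ends g), snd (ends g)) \<in> (adj_rel ends (T - {g}))\<^sup>*"
  shows "has_cycle ends T"
proof (cases "fst (ends g) = snd (ends g)")
  case True
  show ?thesis unfolding has_cycle_def
    apply (rule exI[of _ "[g]"], rule exI[of _ "[fst (ends g), fst (ends g)]"])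
    using assms True by (simp add: joins_def prod_eq_iff)
next
  case False
  obtain vs es where p: "spath ends (T - {g}) (snd (ends g)) (fst (ends g)) vs es"
    using path_exists[OF rtr_sym[OF assms(2)]] by blast
  have ne: "vs \<noteq> []" using p unfolding spath_def by auto
  have h0: "vs ! 0 = snd (ends g)" using p ne unfolding spath_def by (simp add: hd_conv_nth)
  show ?thesis unfolding has_cycle_def
  proof (rule exI[of _ "g # es"], rule exI[of _ "fst (ends g) # vs"], intro conjI)
    show "\<forall>i<length (g # es). joins ends ((g # es) ! i) ((fst (ends g) # vs) ! i) ((fst (ends g) # vs) ! Suc i)"
    proof (intro allI impI)
      fix i assume i: "i < length (g # es)"
      show "joins ends ((g # es) ! i) ((fst (ends g) # vs) ! i) ((fst (ends g) # vs) ! Suc i)"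
      proof (cases i)
        case 0 then show ?thesis using h0 by (simp add: joins_ends)
      next
        case (Suc k) then show ?thesis using i p unfolding spath_def by simp
      qed
    qed
  qed (use p ne assms in \<open>auto simp: spath_def\<close>)
qed

lemma cycle_iff:
  "has_cycle ends T \<longleftrightarrow> (\<exists>g\<in>T. (fst (ends g), snd (ends g)) \<in> (adj_rel ends (T - {g}))\<^sup>*)"
  using cycle_imp imp_cycle by metis

lemma has_cycle_mono: "S \<subseteq> T \<Longrightarrow> has_cycle ends S \<Longrightarrow> has_cycle ends T"
  unfolding has_cycle_def by blast

lemma acyc_sub: "\<not> has_cycle ends T \<Longrightarrow> S \<subseteq> T \<Longrightarrow> \<not> has_cycle ends S"
  using has_cycle_mono by blast

lemma no_cycle_empty: "\<not> has_cycle ends {}"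
  unfolding has_cycle_def by auto

definition isol where "isol ends S v \<longleftrightarrow> (\<forall>e\<in>S. fst (ends e) \<noteq> v \<and> snd (ends e) \<noteq> v)"

lemma iso_reach:
  assumes "isol ends S v" and "(v,y) \<in> (adj_rel ends S)\<^sup>*"
  shows "y = v"
  using assms(2)
proof (induction rule: rtrancl_induct)
  case base then show ?case by simp
next
  case (step y z)
  then show ?case using assms(1) unfolding adj_rel_def joins_def isol_def by force
qed

lemma iso_reach2:
  assumes "isol ends S v" and "(y,v) \<in> (adj_rel ends S)\<^sup>*"
  shows "y = v"
  using iso_reach[OF assms(1) rtr_sym[OF assms(2)]] .

lemma add_edge_reach:
  assumes "(p,q) \<in> (adj_rel ends (insert e S))\<^sup>*" "joins ends e x y"
  shows "(p,q) \<in> (adj_rel ends S)\<^sup>* \<or> ((p,x) \<in> (adj_rel ends S)\<^sup>* \<and> (y,q) \<in> (adj_rel ends S)\<^sup>*)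
     \<or> ((p,y) \<in> (adj_rel ends S)\<^sup>* \<and> (x,q) \<in> (adj_rel ends S)\<^sup>*)"
  using assms(1)
proof (induction rule: rtrancl_induct)
  case base then show ?case by simp
next
  case (step r q)
  from step(2) obtain f where f: "f \<in> insert e S" "joins ends f r q" unfolding adj_rel_def by auto
  show ?case
  proof (cases "f \<in> S")
    case True
    then have "(r,q) \<in> adj_rel ends S" using f(2) unfolding adj_rel_def by auto
    then show ?thesis using step(3) by (meson rtrancl_into_rtrancl)
  next
    case False
    then have "f = e" using f(1) by auto
    then have rq: "(r = x \<and> q = y) \<or> (r = y \<and> q = x)" using f(2) assms(2) unfolding joins_def by auto
    show ?thesis using step(3) rq by auto
  qed
qed

lemma add_edge_acyclic:
  assumes "\<not> has_cycle ends T" "joins ends e x y" "(x,y) \<notin> (adj_rel ends T)\<^sup>*"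
  shows "\<not> has_cycle ends (insert e T)"
proof
  assume "has_cycle ends (insert e T)"
  then obtain g where g: "g \<in> insert e T" "(fst (ends g), snd (ends g)) \<in> (adj_rel ends (insert e T - {g}))\<^sup>*"
    using cycle_imp by blast
  show False
  proof (cases "g = e")
    case True
    then have "(fst (ends e), snd (ends e)) \<in> (adj_rel ends T)\<^sup>*"
    proof -
      have "insert e T - {g} \<subseteq> T" using True by auto
      from rtr_mono[OF this g(2)] show ?thesis using True by simp
    qed
    then show False using assms(2,3) rtr_sym unfolding joins_def by (metis fst_conv snd_conv)
  next
    case False
    then have gT: "g \<in> T" using g(1) by auto
    have eq: "insert e T - {g} = insert e (T - {g})" using False by auto
    define p where "p = fst (ends g)"
    define q where "q = snd (ends g)"
    have pq: "(p, q) \<in> (adj_rel ends T)\<^sup>*" using gT joins_ends edge_rtr unfolding p_def q_def by metis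
    have sub: "T - {g} \<subseteq> T" by auto
    from add_edge_reach[OF g(2)[unfolded eq] assms(2)]
    consider "(p,q) \<in> (adj_rel ends (T-{g}))\<^sup>*"
      | "(p,x) \<in> (adj_rel ends (T-{g}))\<^sup>*" "(y,q) \<in> (adj_rel ends (T-{g}))\<^sup>*"
      | "(p,y) \<in> (adj_rel ends (T-{g}))\<^sup>*" "(x,q) \<in> (adj_rel ends (T-{g}))\<^sup>*"
      unfolding p_def q_def by blast
    then show False
    proof cases
      case 1 then show ?thesis using imp_cycle[OF gT] assms(1) unfolding p_def q_def by blast
    next
      case 2
      then have "(x, p) \<in> (adj_rel ends T)\<^sup>*" "(q, y) \<in> (adj_rel ends T)\<^sup>*"
        using rtr_mono[OF sub] rtr_sym by metis+
      then have "(x,y) \<in> (adj_rel ends T)\<^sup>*" using pq by (meson rtrancl_trans)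
      with assms(3) show ?thesis ..
    next
      case 3
      then have "(y, p) \<in> (adj_rel ends T)\<^sup>*" "(q, x) \<in> (adj_rel ends T)\<^sup>*"
        using rtr_mono[OF sub] rtr_sym by metis+
      then have "(y,x) \<in> (adj_rel ends T)\<^sup>*" using pq by (meson rtrancl_trans)
      with assms(3) rtr_sym show ?thesis by metis
    qed
  qed
qed

lemma pend_reach:
  assumes "isol ends S v" "joins ends e u v" "x \<noteq> v" "y \<noteq> v"
    "(x,y) \<in> (adj_rel ends (insert e S))\<^sup>*"
  shows "(x,y) \<in> (adj_rel ends S)\<^sup>*"
proof -
  have a: "(x,v) \<notin> (adj_rel ends S)\<^sup>*" using iso_reach2[OF assms(1)] assms(3) by blast
  have b: "(v,y) \<notin> (adj_rel ends S)\<^sup>*" using iso_reach[OF assms(1)] assms(4) by blast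
  show ?thesis using add_edge_reach[OF assms(5) assms(2)] a b by blast
qed

lemma pend_reach2:
  assumes "isol ends S v" "joins ends e u v" "x \<noteq> v"
    "(x,v) \<in> (adj_rel ends (insert e S))\<^sup>*"
  shows "(x,u) \<in> (adj_rel ends S)\<^sup>*"
proof -
  have a: "(x,v) \<notin> (adj_rel ends S)\<^sup>*" using iso_reach2[OF assms(1)] assms(3) by blast
  show ?thesis using add_edge_reach[OF assms(4) assms(2)] a by blast
qed

lemma conn_root:
  assumes "r \<in> V"
  shows "connected_on V ends T \<longleftrightarrow> (\<forall>z\<in>V. (r,z) \<in> (adj_rel ends T)\<^sup>*)"
proof
  assume "connected_on V ends T" then show "\<forall>z\<in>V. (r,z) \<in> (adj_rel ends T)\<^sup>*"
    using assms unfolding connected_on_def by simp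
next
  assume h: "\<forall>z\<in>V. (r,z) \<in> (adj_rel ends T)\<^sup>*"
  show "connected_on V ends T" unfolding connected_on_def
  proof (intro ballI)
    fix u v assume "u \<in> V" "v \<in> V"
    then have "(r,u) \<in> (adj_rel ends T)\<^sup>*" "(r,v) \<in> (adj_rel ends T)\<^sup>*" using h by simp_all
    then have "(u,r) \<in> (adj_rel ends T)\<^sup>*" "(r,v) \<in> (adj_rel ends T)\<^sup>*" using rtr_sym by simp_all
    then show "(u, v) \<in> (adj_rel ends T)\<^sup>*" by (rule rtrancl_trans)
  qed
qed


abbreviation AR where "AR S \<equiv> adj_rel mfan_ends S"

definition ST :: "nat \<Rightarrow> nat \<Rightarrow> (nat + nat \<times> nat) set set" where
  "ST a n = {T. is_spanning_tree (mfan_verts n) (mfan_edges a n) mfan_ends T}"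

definition FF :: "nat \<Rightarrow> nat \<Rightarrow> (nat + nat \<times> nat) set set" where
  "FF a n = {F. F \<subseteq> mfan_edges a n \<and> \<not> has_cycle mfan_ends F \<and>
      (\<forall>z\<le>n. (0,z) \<in> (AR F)\<^sup>* \<or> (n,z) \<in> (AR F)\<^sup>*) \<and> (0,n) \<notin> (AR F)\<^sup>*}"

lemma ST_iff: "T \<in> ST a n \<longleftrightarrow> T \<subseteq> mfan_edges a n \<and> \<not> has_cycle mfan_ends T \<and> (\<forall>z\<le>n. (0,z) \<in> (AR T)\<^sup>*)"
proof -
  have c: "connected_on {0..n} mfan_ends T \<longleftrightarrow> (\<forall>z\<in>{0..n}. (0,z) \<in> (AR T)\<^sup>*)"
    by (rule conn_root) simp
  have "(\<forall>z\<in>{0..n}. (0,z) \<in> (AR T)\<^sup>*) \<longleftrightarrow> (\<forall>z\<le>n. (0,z) \<in> (AR T)\<^sup>*)"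
    unfolding Ball_def atLeastAtMost_iff by simp
  with c have "connected_on {0..n} mfan_ends T \<longleftrightarrow> (\<forall>z\<le>n. (0,z) \<in> (AR T)\<^sup>*)" by (rule trans)
  then show ?thesis unfolding ST_def is_spanning_tree_def mfan_verts_def mem_Collect_eq by (simp add: conj_ac)
qed

lemma edges_le: "e \<in> mfan_edges a n \<Longrightarrow> fst (mfan_ends e) \<le> n \<and> snd (mfan_ends e) \<le> n"
  unfolding mfan_edges_def by auto

lemma iso_new: "F \<subseteq> mfan_edges a n \<Longrightarrow> isol mfan_ends F (Suc n)"
  unfolding isol_def using edges_le by fastforce

lemma edges_mono: "mfan_edges a n \<subseteq> mfan_edges a (Suc n)"
  unfolding mfan_edges_def by auto

lemma Inl_in: "1 \<le> n \<Longrightarrow> Inl n \<in> mfan_edges a (Suc n)"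
  unfolding mfan_edges_def by auto

lemma Inr_in: "k \<in> {1..a} \<Longrightarrow> Inr (Suc n, k) \<in> mfan_edges a (Suc n)"
  unfolding mfan_edges_def by auto

lemma Inl_notin: "Inl n \<notin> mfan_edges a n"
  unfolding mfan_edges_def by auto

lemma Inr_notin: "Inr (Suc n, k) \<notin> mfan_edges a n"
  unfolding mfan_edges_def by auto

lemma new_edges: "e \<in> mfan_edges a (Suc n) \<Longrightarrow> e \<notin> mfan_edges a n \<Longrightarrow>
    e = Inl n \<or> (\<exists>k\<in>{1..a}. e = Inr (Suc n, k))"
  unfolding mfan_edges_def by (auto simp: less_Suc_eq le_Suc_eq)

lemma joins_Inl: "joins mfan_ends (Inl n) n (Suc n)"
  unfolding joins_def by simp

lemma joins_Inr: "joins mfan_ends (Inr (j,k)) 0 j"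
  unfolding joins_def by simp

lemma finite_edges: "finite (mfan_edges a n)"
  unfolding mfan_edges_def by auto

lemma finite_ST: "finite (ST a n)"
proof -
  have "ST a n \<subseteq> Pow (mfan_edges a n)" using ST_iff by blast
  then show ?thesis using finite_edges by (meson finite_Pow_iff finite_subset)
qed

lemma finite_FF: "finite (FF a n)"
proof -
  have "FF a n \<subseteq> Pow (mfan_edges a n)" unfolding FF_def by blast
  then show ?thesis using finite_edges by (meson finite_Pow_iff finite_subset)
qed

lemma two_spokes:
  assumes "s1 \<in> T" "s2 \<in> T" "s1 \<noteq> s2" "joins mfan_ends s1 0 j" "joins mfan_ends s2 0 j"
  shows "has_cycle mfan_ends T"
proof -
  have "s2 \<in> T - {s1}" using assms by auto
  then have c: "(0,j) \<in> (AR (T - {s1}))\<^sup>*" by (rule edge_rtr[OF _ assms(5)])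
  have c2: "(j,0) \<in> (AR (T - {s1}))\<^sup>*" by (rule rtr_sym[OF c])
  have "(fst (mfan_ends s1), snd (mfan_ends s1)) \<in> (AR (T - {s1}))\<^sup>*"
    using assms(4) c c2 unfolding joins_def by auto
  then show ?thesis by (rule imp_cycle[OF assms(1)])
qed

lemma remove_pendant:
  assumes "insert e F \<in> ST a (Suc n)" "F \<subseteq> mfan_edges a n" "joins mfan_ends e u (Suc n)"
  shows "F \<in> ST a n"
proof -
  have T: "insert e F \<subseteq> mfan_edges a (Suc n)" "\<not> has_cycle mfan_ends (insert e F)"
     "\<forall>z\<le>Suc n. (0,z) \<in> (AR (insert e F))\<^sup>*" using assms(1) unfolding ST_iff by blast+
  have "\<not> has_cycle mfan_ends F" by (rule acyc_sub[OF T(2)]) blast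
  moreover have "(0,z) \<in> (AR F)\<^sup>*" if "z \<le> n" for z
    using pend_reach[OF iso_new[OF assms(2)] assms(3)] T(3) that by simp
  ultimately show ?thesis using assms(2) unfolding ST_iff by blast
qed

lemma add_pendant:
  assumes "F \<in> ST a n" "e \<in> mfan_edges a (Suc n)" "joins mfan_ends e u (Suc n)" "u \<le> n"
  shows "insert e F \<in> ST a (Suc n)"
proof -
  have F: "F \<subseteq> mfan_edges a n" "\<not> has_cycle mfan_ends F" "\<forall>z\<le>n. (0,z) \<in> (AR F)\<^sup>*"
    using assms(1) unfolding ST_iff by blast+
  have iso: "isol mfan_ends F (Suc n)" by (rule iso_new[OF F(1)])
  have nr: "(u, Suc n) \<notin> (AR F)\<^sup>*"
  proof
    assume "(u, Suc n) \<in> (AR F)\<^sup>*"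
    then have "u = Suc n" by (rule iso_reach2[OF iso])
    with assms(4) show False by simp
  qed
  have ac: "\<not> has_cycle mfan_ends (insert e F)" by (rule add_edge_acyclic[OF F(2) assms(3) nr])
  have sub: "F \<subseteq> insert e F" by (rule subset_insertI)
  have "(0,z) \<in> (AR (insert e F))\<^sup>*" if "z \<le> Suc n" for z
  proof (cases "z \<le> n")
    case True
    then have "(0,z) \<in> (AR F)\<^sup>*" using F(3) by simp
    then show ?thesis by (rule rtr_mono[OF sub])
  next
    case False
    then have z: "z = Suc n" using that by simp
    have "(0,u) \<in> (AR F)\<^sup>*" using F(3) assms(4) by simp
    then have "(0,u) \<in> (AR (insert e F))\<^sup>*" by (rule rtr_mono[OF sub])
    moreover have "(u, Suc n) \<in> AR (insert e F)" by (rule edge_adj[OF insertI1 assms(3)])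
    ultimately show ?thesis using z by (simp add: rtrancl_into_rtrancl)
  qed
  moreover have "insert e F \<subseteq> mfan_edges a (Suc n)" using F(1) edges_mono assms(2) by (simp add: subset_trans)
  ultimately show ?thesis using ac unfolding ST_iff by simp
qed

lemma remove_double:
  assumes "insert (Inl n) (insert (Inr (Suc n, k)) F) \<in> ST a (Suc n)" "F \<subseteq> mfan_edges a n"
  shows "F \<in> FF a n"
proof -
  define s where "s = (Inr (Suc n, k) :: nat + nat \<times> nat)"
  define S1 where "S1 = insert s F"
  define T where "T = insert (Inl n) S1"
  have T: "T \<subseteq> mfan_edges a (Suc n)" "\<not> has_cycle mfan_ends T"
     "\<forall>z\<le>Suc n. (0,z) \<in> (AR T)\<^sup>*" using assms(1) unfolding ST_iff T_def S1_def s_def by blast+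
  have iso: "isol mfan_ends F (Suc n)" using iso_new[OF assms(2)] .
  have js: "joins mfan_ends s 0 (Suc n)" unfolding s_def by (rule joins_Inr)
  have "F \<subseteq> T" unfolding T_def S1_def by blast
  then have ac: "\<not> has_cycle mfan_ends F" by (rule acyc_sub[OF T(2)])
  have nc: "(0,n) \<notin> (AR F)\<^sup>*"
  proof
    assume h: "(0,n) \<in> (AR F)\<^sup>*"
    have sub1: "F \<subseteq> T - {Inl n}" using assms(2) Inl_notin unfolding T_def S1_def by blast
    have sin: "s \<in> T - {Inl n}" unfolding T_def S1_def s_def by simp
    have "(n,0) \<in> (AR (T - {Inl n}))\<^sup>*" using rtr_mono[OF sub1 rtr_sym[OF h]] .
    moreover have "(0, Suc n) \<in> (AR (T - {Inl n}))\<^sup>*" using edge_rtr[OF sin js] .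
    ultimately have "(n, Suc n) \<in> (AR (T - {Inl n}))\<^sup>*" by (rule rtrancl_trans)
    moreover have "Inl n \<in> T" unfolding T_def by simp
    ultimately have "has_cycle mfan_ends T" using imp_cycle[where ends=mfan_ends] by simp
    with T(2) show False ..
  qed
  have "(0,z) \<in> (AR F)\<^sup>* \<or> (n,z) \<in> (AR F)\<^sup>*" if z: "z \<le> n" for z
  proof -
    have "(0,z) \<in> (AR (insert (Inl n) S1))\<^sup>*" using T(3) z unfolding T_def by simp
    from add_edge_reach[OF this joins_Inl]
    consider "(0,z) \<in> (AR S1)\<^sup>*" | "(0,n) \<in> (AR S1)\<^sup>*" "(Suc n,z) \<in> (AR S1)\<^sup>*"
      | "(0,Suc n) \<in> (AR S1)\<^sup>*" "(n,z) \<in> (AR S1)\<^sup>*" by blast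
    then show ?thesis
    proof cases
      case 1 then show ?thesis using pend_reach[OF iso js, of 0 z] z unfolding S1_def by simp
    next
      case 2
      from 2(2) have "(z, Suc n) \<in> (AR S1)\<^sup>*" by (rule rtr_sym)
      then have "(z, 0) \<in> (AR F)\<^sup>*" using pend_reach2[OF iso js, of z] z unfolding S1_def by simp
      then have "(0, z) \<in> (AR F)\<^sup>*" by (rule rtr_sym)
      then show ?thesis by simp
    next
      case 3 then show ?thesis using pend_reach[OF iso js, of n z] z unfolding S1_def by simp
    qed
  qed
  then show ?thesis unfolding FF_def using assms(2) ac nc by blast
qed

lemma add_double:
  assumes "F \<in> FF a n" "1 \<le> n" "k \<in> {1..a}"
  shows "insert (Inl n) (insert (Inr (Suc n, k)) F) \<in> ST a (Suc n)"
proof -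
  define s where "s = (Inr (Suc n, k) :: nat + nat \<times> nat)"
  define S1 where "S1 = insert s F"
  define T where "T = insert (Inl n) S1"
  have F: "F \<subseteq> mfan_edges a n" "\<not> has_cycle mfan_ends F"
      "\<forall>z\<le>n. (0,z) \<in> (AR F)\<^sup>* \<or> (n,z) \<in> (AR F)\<^sup>*" "(0,n) \<notin> (AR F)\<^sup>*"
    using assms(1) unfolding FF_def by blast+
  have iso: "isol mfan_ends F (Suc n)" using iso_new[OF F(1)] .
  have js: "joins mfan_ends s 0 (Suc n)" unfolding s_def by (rule joins_Inr)
  have "(0, Suc n) \<notin> (AR F)\<^sup>*"
  proof
    assume "(0, Suc n) \<in> (AR F)\<^sup>*" then have "0 = Suc n" by (rule iso_reach2[OF iso])
    then show False by simp
  qed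
  then have ac1: "\<not> has_cycle mfan_ends S1" unfolding S1_def using add_edge_acyclic[OF F(2) js] by blast
  have "(n, Suc n) \<notin> (AR S1)\<^sup>*"
  proof
    assume "(n, Suc n) \<in> (AR S1)\<^sup>*"
    then have "(n, 0) \<in> (AR F)\<^sup>*" using pend_reach2[OF iso js, of n] unfolding S1_def by simp
    then have "(0, n) \<in> (AR F)\<^sup>*" by (rule rtr_sym)
    then show False using F(4) by simp
  qed
  then have ac: "\<not> has_cycle mfan_ends T" unfolding T_def using add_edge_acyclic[OF ac1 joins_Inl] by blast
  have subF: "F \<subseteq> T" unfolding T_def S1_def by blast
  have "s \<in> T" unfolding T_def S1_def by simp
  then have e1: "(0, Suc n) \<in> (AR T)\<^sup>*" by (rule edge_rtr[OF _ js])
  have "Inl n \<in> T" unfolding T_def by simp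
  then have "(n, Suc n) \<in> (AR T)\<^sup>*" by (rule edge_rtr[OF _ joins_Inl])
  then have e2: "(Suc n, n) \<in> (AR T)\<^sup>*" by (rule rtr_sym)
  have "(0,z) \<in> (AR T)\<^sup>*" if z: "z \<le> Suc n" for z
  proof (cases "z \<le> n")
    case True
    then consider "(0,z) \<in> (AR F)\<^sup>*" | "(n,z) \<in> (AR F)\<^sup>*" using F(3) by blast
    then show ?thesis
    proof cases
      case 1 then show ?thesis by (rule rtr_mono[OF subF])
    next
      case 2 then have nz: "(n,z) \<in> (AR T)\<^sup>*" by (rule rtr_mono[OF subF])
      have "(0, n) \<in> (AR T)\<^sup>*" by (rule rtrancl_trans[OF e1 e2])
      then show ?thesis by (rule rtrancl_trans[OF _ nz])
    qed
  next
    case False then have "z = Suc n" using z by simp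
    then show ?thesis using e1 by simp
  qed
  moreover have "T \<subseteq> mfan_edges a (Suc n)" unfolding T_def S1_def s_def
    using F(1) edges_mono Inl_in[OF assms(2)] Inr_in[OF assms(3)] by blast
  ultimately show ?thesis using ac unfolding ST_iff T_def S1_def s_def by blast
qed

lemma FF_fwd_none:
  assumes "F \<in> FF a (Suc n)" "F \<subseteq> mfan_edges a n"
  shows "F \<in> ST a n"
proof -
  have F: "\<not> has_cycle mfan_ends F"
      "\<forall>z\<le>Suc n. (0,z) \<in> (AR F)\<^sup>* \<or> (Suc n,z) \<in> (AR F)\<^sup>*"
    using assms(1) unfolding FF_def by blast+
  have "(0,z) \<in> (AR F)\<^sup>*" if "z \<le> n" for z
  proof -
    have "(Suc n, z) \<notin> (AR F)\<^sup>*"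
    proof
      assume "(Suc n, z) \<in> (AR F)\<^sup>*" then have "z = Suc n" by (rule iso_reach[OF iso_new[OF assms(2)]])
      with that show False by simp
    qed
    moreover have "z \<le> Suc n" using that by simp
    then have "(0,z) \<in> (AR F)\<^sup>* \<or> (Suc n,z) \<in> (AR F)\<^sup>*" using F(2) by blast
    ultimately show ?thesis by blast
  qed
  then show ?thesis using F(1) assms(2) unfolding ST_iff by blast
qed

lemma FF_fwd_L:
  assumes "insert (Inl n) F \<in> FF a (Suc n)" "F \<subseteq> mfan_edges a n"
  shows "F \<in> FF a n"
proof -
  have F: "\<not> has_cycle mfan_ends (insert (Inl n) F)"
      "\<forall>z\<le>Suc n. (0,z) \<in> (AR (insert (Inl n) F))\<^sup>* \<or> (Suc n,z) \<in> (AR (insert (Inl n) F))\<^sup>*"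
      "(0, Suc n) \<notin> (AR (insert (Inl n) F))\<^sup>*"
    using assms(1) unfolding FF_def by blast+
  have iso: "isol mfan_ends F (Suc n)" using iso_new[OF assms(2)] .
  have ac: "\<not> has_cycle mfan_ends F" by (rule acyc_sub[OF F(1)]) blast
  have sub: "F \<subseteq> insert (Inl n) F" by blast
  have nc: "(0,n) \<notin> (AR F)\<^sup>*"
  proof
    assume "(0,n) \<in> (AR F)\<^sup>*"
    then have "(0,n) \<in> (AR (insert (Inl n) F))\<^sup>*" by (rule rtr_mono[OF sub])
    moreover have "(n, Suc n) \<in> AR (insert (Inl n) F)" by (rule edge_adj[OF insertI1 joins_Inl])
    ultimately have "(0, Suc n) \<in> (AR (insert (Inl n) F))\<^sup>*" by (rule rtrancl_into_rtrancl)
    then show False using F(3) by simp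
  qed
  have "(0,z) \<in> (AR F)\<^sup>* \<or> (n,z) \<in> (AR F)\<^sup>*" if z: "z \<le> n" for z
  proof -
    have "z \<le> Suc n" using z by simp
    then consider "(0,z) \<in> (AR (insert (Inl n) F))\<^sup>*" | "(Suc n,z) \<in> (AR (insert (Inl n) F))\<^sup>*"
      using F(2) by blast
    then show ?thesis
    proof cases
      case 1 then show ?thesis using pend_reach[OF iso joins_Inl, of 0 z] z by simp
    next
      case 2
      from 2 have "(z, Suc n) \<in> (AR (insert (Inl n) F))\<^sup>*" by (rule rtr_sym)
      then have "(z, n) \<in> (AR F)\<^sup>*" using pend_reach2[OF iso joins_Inl, of z] z by simp
      then have "(n, z) \<in> (AR F)\<^sup>*" by (rule rtr_sym)
      then show ?thesis by simp
    qed
  qed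
  then show ?thesis unfolding FF_def using assms(2) ac nc by blast
qed

lemma FF_no_spoke:
  assumes "F \<in> FF a (Suc n)"
  shows "Inr (Suc n, k) \<notin> F"
proof
  assume "Inr (Suc n, k) \<in> F"
  then have "(0, Suc n) \<in> (AR F)\<^sup>*" by (rule edge_rtr[OF _ joins_Inr])
  then show False using assms unfolding FF_def by blast
qed

lemma FF_bwd_ST:
  assumes "F \<in> ST a n"
  shows "F \<in> FF a (Suc n)"
proof -
  have F: "F \<subseteq> mfan_edges a n" "\<not> has_cycle mfan_ends F" "\<forall>z\<le>n. (0,z) \<in> (AR F)\<^sup>*"
    using assms unfolding ST_iff by blast+
  have "(0, Suc n) \<notin> (AR F)\<^sup>*"
  proof
    assume "(0, Suc n) \<in> (AR F)\<^sup>*" then have "0 = Suc n" by (rule iso_reach2[OF iso_new[OF F(1)]])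
    then show False by simp
  qed
  moreover have "\<forall>z\<le>Suc n. (0,z) \<in> (AR F)\<^sup>* \<or> (Suc n,z) \<in> (AR F)\<^sup>*"
    using F(3) by (auto simp: le_Suc_eq)
  moreover have "F \<subseteq> mfan_edges a (Suc n)" using F(1) edges_mono by blast
  ultimately show ?thesis unfolding FF_def using F(2) by blast
qed

lemma FF_bwd_L:
  assumes "F \<in> FF a n" "1 \<le> n"
  shows "insert (Inl n) F \<in> FF a (Suc n)"
proof -
  have F: "F \<subseteq> mfan_edges a n" "\<not> has_cycle mfan_ends F"
      "\<forall>z\<le>n. (0,z) \<in> (AR F)\<^sup>* \<or> (n,z) \<in> (AR F)\<^sup>*" "(0,n) \<notin> (AR F)\<^sup>*"
    using assms(1) unfolding FF_def by blast+
  have iso: "isol mfan_ends F (Suc n)" using iso_new[OF F(1)] .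
  have "(n, Suc n) \<notin> (AR F)\<^sup>*"
  proof
    assume "(n, Suc n) \<in> (AR F)\<^sup>*" then have "n = Suc n" by (rule iso_reach2[OF iso])
    then show False by simp
  qed
  then have ac: "\<not> has_cycle mfan_ends (insert (Inl n) F)" using add_edge_acyclic[OF F(2) joins_Inl] by blast
  have nc: "(0, Suc n) \<notin> (AR (insert (Inl n) F))\<^sup>*"
  proof
    assume "(0, Suc n) \<in> (AR (insert (Inl n) F))\<^sup>*"
    then have "(0, n) \<in> (AR F)\<^sup>*" using pend_reach2[OF iso joins_Inl, of 0] by simp
    with F(4) show False ..
  qed
  have sub: "F \<subseteq> insert (Inl n) F" by blast
  have "(n, Suc n) \<in> (AR (insert (Inl n) F))\<^sup>*" by (rule edge_rtr[OF insertI1 joins_Inl])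
  then have e: "(Suc n, n) \<in> (AR (insert (Inl n) F))\<^sup>*" by (rule rtr_sym)
  have "(0,z) \<in> (AR (insert (Inl n) F))\<^sup>* \<or> (Suc n,z) \<in> (AR (insert (Inl n) F))\<^sup>*" if z: "z \<le> Suc n" for z
  proof (cases "z \<le> n")
    case True
    then consider "(0,z) \<in> (AR F)\<^sup>*" | "(n,z) \<in> (AR F)\<^sup>*" using F(3) by blast
    then show ?thesis
    proof cases
      case 1 then have "(0,z) \<in> (AR (insert (Inl n) F))\<^sup>*" by (rule rtr_mono[OF sub])
      then show ?thesis by simp
    next
      case 2 then have "(n,z) \<in> (AR (insert (Inl n) F))\<^sup>*" by (rule rtr_mono[OF sub])
      then have "(Suc n, z) \<in> (AR (insert (Inl n) F))\<^sup>*" by (rule rtrancl_trans[OF e])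
      then show ?thesis by simp
    qed
  next
    case False then have "z = Suc n" using z by simp
    then show ?thesis by simp
  qed
  moreover have "insert (Inl n) F \<subseteq> mfan_edges a (Suc n)" using F(1) edges_mono Inl_in[OF assms(2)] by blast
  ultimately show ?thesis unfolding FF_def using ac nc by blast
qed


lemma ST_Suc:
  assumes n: "1 \<le> n"
  shows "card (ST a (Suc n)) = Suc a * card (ST a n) + a * card (FF a n)"
proof -
  define E where "E = mfan_edges a n"
  define L where "L = (Inl n :: nat + nat \<times> nat)"
  define Sp where "Sp = (\<lambda>k. Inr (Suc n, k) :: nat + nat \<times> nat) ` {1..a}"
  define D where "D = (\<lambda>T :: (nat + nat \<times> nat) set. (T - E, T \<inter> E))"
  define A1 where "A1 = insert {L} ((\<lambda>s. {s}) ` Sp)"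
  define A2 where "A2 = (\<lambda>s. {L, s}) ` Sp"
  have LnSp: "L \<notin> Sp" unfolding L_def Sp_def by auto
  have LnE: "L \<notin> E" unfolding L_def E_def by (rule Inl_notin)
  have SpnE: "s \<notin> E" if "s \<in> Sp" for s using that Inr_notin unfolding Sp_def E_def by blast
  have Spj: "joins mfan_ends s 0 (Suc n)" if "s \<in> Sp" for s using that joins_Inr unfolding Sp_def by blast
  have injD: "inj_on D X" for X
  proof (rule inj_onI)
    fix x y assume "D x = D y"
    then have "x - E = y - E" "x \<inter> E = y \<inter> E" unfolding D_def by auto
    then show "x = y" by blast
  qed
  have img: "D ` ST a (Suc n) = A1 \<times> ST a n \<union> A2 \<times> FF a n"
  proof
    show "D ` ST a (Suc n) \<subseteq> A1 \<times> ST a n \<union> A2 \<times> FF a n"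
    proof
      fix p assume "p \<in> D ` ST a (Suc n)"
      then obtain T where T: "T \<in> ST a (Suc n)" "p = (T - E, T \<inter> E)" unfolding D_def by blast
      have Tsub: "T \<subseteq> mfan_edges a (Suc n)" and Tac: "\<not> has_cycle mfan_ends T"
        and Tc: "(0, Suc n) \<in> (AR T)\<^sup>*" using T(1) unfolding ST_iff by blast+
      have N: "T - E \<subseteq> insert L Sp" using Tsub new_edges unfolding E_def L_def Sp_def by blast
      have one: "s = s'" if "s \<in> T" "s' \<in> T" "s \<in> Sp" "s' \<in> Sp" for s s'
        using two_spokes[OF that(1,2) _ Spj[OF that(3)] Spj[OF that(4)]] Tac by blast
      have FE: "T \<inter> E \<subseteq> mfan_edges a n" unfolding E_def by blast
      have Tdec: "T = (T - E) \<union> (T \<inter> E)" by blast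
      show "p \<in> A1 \<times> ST a n \<union> A2 \<times> FF a n"
      proof (cases "L \<in> T")
        case False
        have "T - E \<noteq> {}"
        proof
          assume "T - E = {}"
          then have "T \<subseteq> mfan_edges a n" unfolding E_def by blast
          from iso_reach2[OF iso_new[OF this] Tc] show False by simp
        qed
        then obtain s where s: "s \<in> T - E" by blast
        have sSp: "s \<in> Sp" using s N False by blast
        have "T - E = {s}" using s N False one sSp by blast
        then have "T = insert s (T \<inter> E)" using Tdec by blast
        then have "T \<inter> E \<in> ST a n" using remove_pendant[OF _ FE Spj[OF sSp]] T(1) by metis
        then show ?thesis using T(2) \<open>T - E = {s}\<close> sSp unfolding A1_def by blast
      next
        case True
        show ?thesis
        proof (cases "T - E = {L}")
          case True
          then have "T = insert L (T \<inter> E)" using Tdec by blast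
          then have "T \<inter> E \<in> ST a n" using remove_pendant[OF _ FE joins_Inl] T(1) unfolding L_def by metis
          then show ?thesis using T(2) True unfolding A1_def by blast
        next
          case False
          then obtain s where s: "s \<in> T - E" "s \<noteq> L" using \<open>L \<in> T\<close> LnE by blast
          have sSp: "s \<in> Sp" using s N by blast
          have TE: "T - E = {L, s}" using s N one sSp \<open>L \<in> T\<close> LnE by blast
          obtain k where k: "s = Inr (Suc n, k)" using sSp unfolding Sp_def by blast
          have "T = insert (Inl n) (insert (Inr (Suc n, k)) (T \<inter> E))" using Tdec TE k unfolding L_def by blast
          then have "T \<inter> E \<in> FF a n" using remove_double[OF _ FE] T(1) by metis
          then show ?thesis using T(2) TE sSp unfolding A2_def by blast
        qed
      qed
    qed
  next
    show "A1 \<times> ST a n \<union> A2 \<times> FF a n \<subseteq> D ` ST a (Suc n)"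
    proof
      fix p assume p: "p \<in> A1 \<times> ST a n \<union> A2 \<times> FF a n"
      obtain N F where pNF: "p = (N, F)" by (cases p)
      have NE: "N \<inter> E = {}"
        using p LnE SpnE unfolding pNF A1_def A2_def by blast
      have "F \<in> ST a n \<or> F \<in> FF a n" using p unfolding pNF by blast
      then have FE: "F \<subseteq> E" unfolding FF_def E_def ST_iff by blast
      have DT: "D (N \<union> F) = (N, F)" unfolding D_def using NE FE by blast
      have "N \<union> F \<in> ST a (Suc n)"
      proof -
        consider "N = {L}" "F \<in> ST a n" | s where "s \<in> Sp" "N = {s}" "F \<in> ST a n"
          | s where "s \<in> Sp" "N = {L, s}" "F \<in> FF a n"
          using p unfolding pNF A1_def A2_def by blast
        then show ?thesis
        proof cases
          case 1 then show ?thesis using add_pendant[OF _ Inl_in[OF n] joins_Inl, of F] unfolding L_def by simp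
        next
          case (2 s)
          then obtain k where k: "k \<in> {1..a}" "s = Inr (Suc n, k)" unfolding Sp_def by blast
          then show ?thesis using 2 add_pendant[OF _ Inr_in[OF k(1)] joins_Inr, of F n] by simp
        next
          case (3 s)
          then obtain k where k: "k \<in> {1..a}" "s = Inr (Suc n, k)" unfolding Sp_def by blast
          then show ?thesis using 3 add_double[OF _ n k(1), of F] unfolding L_def by simp
        qed
      qed
      then show "p \<in> D ` ST a (Suc n)" using DT pNF by (metis image_eqI)
    qed
  qed
  have cSp: "card Sp = a" unfolding Sp_def by (subst card_image) (auto simp: inj_on_def)
  have fSp: "finite Sp" unfolding Sp_def by simp
  have cA1: "card A1 = Suc a" unfolding A1_def using LnSp fSp cSp
    by (subst card_insert_disjoint) (auto simp: card_image inj_on_def)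
  have cA2: "card A2 = a" unfolding A2_def using LnSp cSp
    by (subst card_image) (auto simp: inj_on_def doubleton_eq_iff)
  have fA1: "finite A1" unfolding A1_def using fSp by simp
  have fA2: "finite A2" unfolding A2_def using fSp by simp
  have disj: "A1 \<inter> A2 = {}" unfolding A1_def A2_def using LnSp by (auto simp: doubleton_eq_iff)
  have "card (ST a (Suc n)) = card (D ` ST a (Suc n))" using injD by (simp add: card_image)
  also have "\<dots> = card (A1 \<times> ST a n) + card (A2 \<times> FF a n)"
    unfolding img by (rule card_Un_disjoint) (use fA1 fA2 finite_ST finite_FF disj in auto)
  also have "\<dots> = Suc a * card (ST a n) + a * card (FF a n)"
    using cA1 cA2 by (simp add: card_cartesian_product)
  finally show ?thesis .
qed

lemma FF_Suc:
  assumes n: "1 \<le> n"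
  shows "card (FF a (Suc n)) = card (ST a n) + card (FF a n)"
proof -
  define E where "E = mfan_edges a n"
  define L where "L = (Inl n :: nat + nat \<times> nat)"
  define D where "D = (\<lambda>T :: (nat + nat \<times> nat) set. (T - E, T \<inter> E))"
  have LnE: "L \<notin> E" unfolding L_def E_def by (rule Inl_notin)
  have injD: "inj_on D X" for X
  proof (rule inj_onI)
    fix x y assume "D x = D y"
    then have "x - E = y - E" "x \<inter> E = y \<inter> E" unfolding D_def by auto
    then show "x = y" by blast
  qed
  have img: "D ` FF a (Suc n) = {{}} \<times> ST a n \<union> {{L}} \<times> FF a n"
  proof
    show "D ` FF a (Suc n) \<subseteq> {{}} \<times> ST a n \<union> {{L}} \<times> FF a n"
    proof
      fix p assume "p \<in> D ` FF a (Suc n)"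
      then obtain T where T: "T \<in> FF a (Suc n)" "p = (T - E, T \<inter> E)" unfolding D_def by blast
      have Tsub: "T \<subseteq> mfan_edges a (Suc n)" using T(1) unfolding FF_def by blast
      have N: "T - E \<subseteq> {L}" using Tsub new_edges FF_no_spoke[OF T(1)] unfolding E_def L_def by blast
      have FE: "T \<inter> E \<subseteq> mfan_edges a n" unfolding E_def by blast
      have Tdec: "T = (T - E) \<union> (T \<inter> E)" by blast
      show "p \<in> {{}} \<times> ST a n \<union> {{L}} \<times> FF a n"
      proof (cases "L \<in> T")
        case False
        then have "T - E = {}" using N by blast
        then have "T \<subseteq> mfan_edges a n" unfolding E_def by blast
        then have "T \<in> ST a n" using FF_fwd_none[OF T(1)] by blast
        moreover have "T \<inter> E = T" using \<open>T \<subseteq> mfan_edges a n\<close> unfolding E_def by blast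
        ultimately show ?thesis using T(2) \<open>T - E = {}\<close> by simp
      next
        case True
        then have TE: "T - E = {L}" using N LnE by blast
        then have "T = insert (Inl n) (T \<inter> E)" using Tdec unfolding L_def by blast
        then have "T \<inter> E \<in> FF a n" using FF_fwd_L[OF _ FE] T(1) by metis
        then show ?thesis using T(2) TE by blast
      qed
    qed
  next
    show "{{}} \<times> ST a n \<union> {{L}} \<times> FF a n \<subseteq> D ` FF a (Suc n)"
    proof
      fix p assume p: "p \<in> {{}} \<times> ST a n \<union> {{L}} \<times> FF a n"
      obtain N F where pNF: "p = (N, F)" by (cases p)
      have NE: "N \<inter> E = {}"
        using p LnE unfolding pNF by blast
      have "F \<in> ST a n \<or> F \<in> FF a n" using p unfolding pNF by blast
      then have FE: "F \<subseteq> E" unfolding FF_def E_def ST_iff by blast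
      have DT: "D (N \<union> F) = (N, F)" unfolding D_def using NE FE by blast
      have "N \<union> F \<in> FF a (Suc n)"
      proof -
        consider "N = {}" "F \<in> ST a n" | "N = {L}" "F \<in> FF a n"
          using p unfolding pNF by blast
        then show ?thesis
        proof cases
          case 1 then show ?thesis using FF_bwd_ST by simp
        next
          case 2 then show ?thesis using FF_bwd_L[OF _ n] unfolding L_def by simp
        qed
      qed
      then show "p \<in> D ` FF a (Suc n)" using DT pNF by (metis image_eqI)
    qed
  qed
  have "card (FF a (Suc n)) = card (D ` FF a (Suc n))" using injD by (simp add: card_image)
  also have "\<dots> = card ({{} :: (nat + nat \<times> nat) set} \<times> ST a n) + card ({{L}} \<times> FF a n)"
    unfolding img by (rule card_Un_disjoint) (use finite_ST finite_FF in auto)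
  also have "\<dots> = card (ST a n) + card (FF a n)"
    by (simp add: card_cartesian_product)
  finally show ?thesis .
qed

lemma ST0: "{} \<in> ST a 0"
  unfolding ST_iff using no_cycle_empty by auto

lemma edges1: "e \<in> mfan_edges a (Suc 0) \<Longrightarrow> \<exists>k\<in>{1..a}. e = Inr (Suc 0, k)"
  unfolding mfan_edges_def by auto

lemma ST1: "card (ST a (Suc 0)) = a"
proof -
  have eq: "ST a (Suc 0) = (\<lambda>k. {Inr (Suc 0, k)}) ` {1..a}"
  proof
    show "ST a (Suc 0) \<subseteq> (\<lambda>k. {Inr (Suc 0, k)}) ` {1..a}"
    proof
      fix T assume T: "T \<in> ST a (Suc 0)"
      have Tsub: "T \<subseteq> mfan_edges a (Suc 0)" and Tac: "\<not> has_cycle mfan_ends T"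
        and Tc: "(0, Suc 0) \<in> (AR T)\<^sup>*" using T unfolding ST_iff by blast+
      have "T \<noteq> {}"
      proof
        assume "T = {}"
        then have "isol mfan_ends T (Suc 0)" unfolding isol_def by simp
        from iso_reach2[OF this Tc] show False by simp
      qed
      then obtain s where s: "s \<in> T" by blast
      then obtain k where k: "k \<in> {1..a}" "s = Inr (Suc 0, k)" using Tsub edges1 by blast
      have "s' = s" if s'T: "s' \<in> T" for s'
      proof (rule ccontr)
        assume ne: "s' \<noteq> s"
        have "s' \<in> mfan_edges a (Suc 0)" using s'T Tsub by blast
        then obtain k' where k': "s' = Inr (Suc 0, k')" using edges1 by blast
        have j1: "joins mfan_ends s' 0 (Suc 0)" unfolding k' by (rule joins_Inr)
        have j2: "joins mfan_ends s 0 (Suc 0)" unfolding k(2) by (rule joins_Inr)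
        have "has_cycle mfan_ends T" by (rule two_spokes[OF s'T s ne j1 j2])
        with Tac show False by simp
      qed
      then have "T = {Inr (Suc 0, k)}" using s k by blast
      then show "T \<in> (\<lambda>k. {Inr (Suc 0, k)}) ` {1..a}" using k by blast
    qed
  next
    show "(\<lambda>k. {Inr (Suc 0, k)}) ` {1..a} \<subseteq> ST a (Suc 0)"
      using add_pendant[OF ST0 Inr_in joins_Inr] by auto
  qed
  show ?thesis unfolding eq by (subst card_image) (auto simp: inj_on_def)
qed

lemma FF1: "card (FF a (Suc 0)) = 1"
proof -
  have "FF a (Suc 0) = {{}}"
  proof
    show "FF a (Suc 0) \<subseteq> {{}}"
    proof
      fix F assume F: "F \<in> FF a (Suc 0)"
      have "F = {}"
      proof (rule ccontr)
        assume "F \<noteq> {}"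
        then obtain s where "s \<in> F" by blast
        moreover have "F \<subseteq> mfan_edges a (Suc 0)" using F unfolding FF_def by blast
        ultimately show False using edges1 FF_no_spoke[OF F] by blast
      qed
      then show "F \<in> {{}}" by simp
    qed
  next
    show "{{}} \<subseteq> FF a (Suc 0)" using FF_bwd_ST[OF ST0] by simp
  qed
  then show ?thesis by simp
qed


definition Bp :: "nat \<Rightarrow> int \<Rightarrow> int" where
  "Bp m x = (case m of 0 \<Rightarrow> 0 | Suc j \<Rightarrow> morgan_voyce_B j x)"

lemma B_rec: "morgan_voyce_B (Suc m) x = (x + 2) * morgan_voyce_B m x - Bp m x"
  by (cases m) (simp_all add: Bp_def)

lemma main_count:
  "int (card (ST a (Suc m))) = int a * morgan_voyce_B m (int a) \<and>
   int (card (FF a (Suc m))) = morgan_voyce_B m (int a) - Bp m (int a)"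
proof (induction m)
  case 0 then show ?case by (simp add: ST1 FF1 Bp_def)
next
  case (Suc m)
  have s: "card (ST a (Suc (Suc m))) = Suc a * card (ST a (Suc m)) + a * card (FF a (Suc m))"
    by (rule ST_Suc) simp
  have f: "card (FF a (Suc (Suc m))) = card (ST a (Suc m)) + card (FF a (Suc m))"
    by (rule FF_Suc) simp
  have bp: "Bp (Suc m) (int a) = morgan_voyce_B m (int a)" by (simp add: Bp_def)
  define t where "t = int (card (ST a (Suc m)))"
  define g where "g = int (card (FF a (Suc m)))"
  define b where "b = morgan_voyce_B m (int a)"
  define p where "p = Bp m (int a)"
  have ih: "t = int a * b" "g = b - p" using Suc.IH unfolding t_def g_def b_def p_def by simp_all
  have "int (card (ST a (Suc (Suc m)))) = (int a + 1) * t + int a * g" unfolding s t_def g_def by (simp add: algebra_simps)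
  also have "\<dots> = int a * ((int a + 2) * b - p)" unfolding ih by (simp add: algebra_simps)
  finally have 1: "int (card (ST a (Suc (Suc m)))) = int a * morgan_voyce_B (Suc m) (int a)"
    unfolding B_rec b_def p_def .
  have "int (card (FF a (Suc (Suc m)))) = t + g" unfolding f t_def g_def by simp
  also have "\<dots> = ((int a + 2) * b - p) - b" unfolding ih by (simp add: algebra_simps)
  finally have 2: "int (card (FF a (Suc (Suc m)))) = morgan_voyce_B (Suc m) (int a) - Bp (Suc m) (int a)"
    unfolding B_rec bp b_def p_def .
  show ?case using 1 2 by simp
qed

lemma B_fib: "morgan_voyce_B m (1::int) = int (fib (2*m+2)) \<and>
  morgan_voyce_B (Suc m) (1::int) = int (fib (2*m+4))"
proof (induction m)
  case 0 then show ?case by (simp add: numeral_eq_Suc)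
next
  case (Suc m)
  then show ?case by (simp add: numeral_eq_Suc)
qed

theorem theorem5p9:
  fixes a n :: nat
  assumes "a \<ge> 1" and "n \<ge> 2"
  shows "int (num_spanning_trees (mfan_verts n) (mfan_edges a n) mfan_ends)
           = int a * morgan_voyce_B (n - 1) (int a)
         \<and> (a = 1 \<longrightarrow>
              num_spanning_trees (mfan_verts n) (mfan_edges a n) mfan_ends = fib (2 * n))"
proof -
  obtain m where m: "n = Suc m" using assms(2) by (cases n) auto
  have eq: "num_spanning_trees (mfan_verts n) (mfan_edges a n) mfan_ends = card (ST a n)"
    unfolding num_spanning_trees_def ST_def ..
  have 1: "int (card (ST a n)) = int a * morgan_voyce_B (n - 1) (int a)"
    using main_count[of a m] m by simp
  moreover have "a = 1 \<longrightarrow> card (ST a n) = fib (2 * n)"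
  proof
    assume a1: "a = 1"
    have "int (card (ST a n)) = int (fib (2*m+2))" using 1 a1 B_fib[of m] m by simp
    then show "card (ST a n) = fib (2 * n)" using m by simp
  qed
  ultimately show ?thesis unfolding eq by blast
qed

end
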